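(* Let $f:\mathbb{R}^n\to\mathbb{R}$ be $L$-smooth (differentiable with $L$-Lipschitz gradient) and $\mu$-strongly convex with $0<\mu\le L$, let $\mathcal{X}\subset\mathbb{R}^n$ be a nonempty closed convex set, and let $x^\star$ be the unique minimizer of $f$ over $\mathcal{X}$. Let $x^t\in\mathbb{R}^n$ be a (possibly random) point and $g^t$ a random vector in $\mathbb{R}^n$ such that, with $\mathbb{E}_t[\cdot]=\mathbb{E}[\cdot\mid x^t]$, $$\|\mathbb{E}_t[g^t]-\nabla f(x^t)\|\le C_t,\qquad \mathbb{E}_t\|g^t-\mathbb{E}_t[g^t]\|^2\le D_t$$ for some $C_t,D_t\ge0$. Let $x^{t+1}=P_{\mathcal{X}}(x^t-\eta g^t)$ with $\eta=\frac{1}{2(\mu+L)}$, where $P_{\mathcal{X}}$ is the Euclidean projection onto $\mathcal{X}$. Then $$\mathbb{E}_t\|x^{t+1}-x^\star\|^2\le\Big(1-\frac{\mu}{2(\mu+L)}\Big)\|x^t-x^\star\|^2+\Big(\frac{1}{2(\mu+L)^2}+\frac{1}{2\mu L}\Big)C_t^2+\frac{1}{4(\mu+L)^2}D_t.$$ *)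

theory Defs
  imports "HOL-Analysis.Analysis" "HOL-Probability.Probability"
begin

definition strongly_convex_on :: "'a::real_normed_vector set \<Rightarrow> real \<Rightarrow> ('a \<Rightarrow> real) \<Rightarrow> bool" where
  "strongly_convex_on S mu f \<longleftrightarrow> convex S \<and>
     (\<forall>x\<in>S. \<forall>y\<in>S. \<forall>t::real. 0 \<le> t \<and> t \<le> 1 \<longrightarrow>
        f (t *\<^sub>R x + (1 - t) *\<^sub>R y) \<le> t * f x + (1 - t) * f y - mu / 2 * t * (1 - t) * (norm (x - y))\<^sup>2)"

definition L_smooth :: "real \<Rightarrow> ('a::real_inner \<Rightarrow> real) \<Rightarrow> ('a \<Rightarrow> 'a) \<Rightarrow> bool" where
  "L_smooth L f grad \<longleftrightarrow>
     (\<forall>x. (f has_derivative (\<lambda>h. grad x \<bullet> h)) (at x)) \<and>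
     (\<forall>x y. norm (grad x - grad y) \<le> L * norm (x - y))"

end

theory Submission
  imports Defs
begin


lemma line_deriv:
  fixes f :: "'a::real_inner \<Rightarrow> real"
  assumes "\<forall>x. (f has_derivative (\<lambda>h. grad x \<bullet> h)) (at x)"
  shows "((\<lambda>t. f (x + t *\<^sub>R v)) has_real_derivative (grad (x + t *\<^sub>R v) \<bullet> v)) (at t)"
proof -
  have 1: "((\<lambda>t. x + t *\<^sub>R v) has_derivative (\<lambda>h. h *\<^sub>R v)) (at t)"
    by (auto intro!: derivative_eq_intros)
  have "((\<lambda>t. f (x + t *\<^sub>R v)) has_derivative (\<lambda>h. grad (x + t *\<^sub>R v) \<bullet> (h *\<^sub>R v))) (at t)"
    using has_derivative_compose[OF 1 assms[rule_format, of "x + t *\<^sub>R v"]] by (simp add: o_def)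
  moreover have "(\<lambda>h. grad (x + t *\<^sub>R v) \<bullet> (h *\<^sub>R v)) = (*) (grad (x + t *\<^sub>R v) \<bullet> v)"
    by (auto simp: mult.commute)
  ultimately show ?thesis by (simp add: has_field_derivative_def)
qed

lemma descent:
  fixes f :: "'a::real_inner \<Rightarrow> real"
  assumes "L_smooth L f grad"
  shows "f y \<le> f x + grad x \<bullet> (y - x) + L / 2 * (norm (y - x))\<^sup>2"
proof -
  define v where "v = y - x"
  define psi where "psi t = f (x + t *\<^sub>R v) - t * (grad x \<bullet> v) - L / 2 * t\<^sup>2 * (norm v)\<^sup>2" for t
  have d: "\<forall>x. (f has_derivative (\<lambda>h. grad x \<bullet> h)) (at x)" and lip: "\<And>x y. norm (grad x - grad y) \<le> L * norm (x - y)"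
    using assms unfolding L_smooth_def by auto
  have D: "DERIV psi t :> (grad (x + t *\<^sub>R v) \<bullet> v - grad x \<bullet> v - L * t * (norm v)\<^sup>2)" for t
    unfolding psi_def
    by (rule derivative_eq_intros line_deriv[OF d] | simp)+
  have nonpos: "grad (x + t *\<^sub>R v) \<bullet> v - grad x \<bullet> v - L * t * (norm v)\<^sup>2 \<le> 0" if "0 \<le> t" for t
  proof -
    have "grad (x + t *\<^sub>R v) \<bullet> v - grad x \<bullet> v = (grad (x + t *\<^sub>R v) - grad x) \<bullet> v"
      by (simp add: inner_diff_left)
    also have "\<dots> \<le> norm (grad (x + t *\<^sub>R v) - grad x) * norm v"
      by (rule norm_cauchy_schwarz)
    also have "\<dots> \<le> L * norm (t *\<^sub>R v) * norm v"
      using lip[of "x + t *\<^sub>R v" x] by (intro mult_right_mono) auto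
    also have "\<dots> = L * t * (norm v)\<^sup>2" using that by (simp add: power2_eq_square)
    finally show ?thesis by simp
  qed
  have "psi 1 \<le> psi 0"
  proof (rule DERIV_nonpos_imp_nonincreasing[of 0 1])
    fix t :: real assume "0 \<le> t" "t \<le> 1"
    then show "\<exists>y. DERIV psi t :> y \<and> y \<le> 0" using D[of t] nonpos[of t] by blast
  qed simp
  then show ?thesis unfolding psi_def v_def by simp
qed

lemma sc_first:
  fixes f :: "'a::real_inner \<Rightarrow> real"
  assumes sc: "strongly_convex_on UNIV mu f"
    and d: "\<forall>x. (f has_derivative (\<lambda>h. grad x \<bullet> h)) (at x)"
  shows "f y \<ge> f x + grad x \<bullet> (y - x) + mu / 2 * (norm (y - x))\<^sup>2"
proof (rule ccontr)
  assume neg: "\<not> ?thesis"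
  define v where "v = y - x"
  define c where "c = mu / 2 * (norm v)\<^sup>2"
  define psi where "psi t = f (x + t *\<^sub>R v) + c * (t - t\<^sup>2) - t * (f y - f x)" for t
  have D0: "DERIV (\<lambda>t. c * (t - t\<^sup>2)) 0 :> c"
    by (auto intro!: derivative_eq_intros)
  have D1: "DERIV (\<lambda>t. t * (f y - f x)) 0 :> (f y - f x)"
    by (auto intro!: derivative_eq_intros)
  have D: "DERIV psi 0 :> (grad (x + 0 *\<^sub>R v) \<bullet> v + c - (f y - f x))"
    unfolding psi_def
    by (intro DERIV_diff DERIV_add line_deriv[OF d] D0 D1)
  have pos: "grad (x + 0 *\<^sub>R v) \<bullet> v + c - (f y - f x) > 0"
    using neg by (simp add: v_def c_def)
  obtain e where e: "e > 0" "\<And>h. h > 0 \<Longrightarrow> h < e \<Longrightarrow> psi 0 < psi (0 + h)"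
    using DERIV_pos_inc_right[OF D pos] by blast
  define h where "h = min (e / 2) (1 / 2)"
  have h: "h > 0" "h < e" "h \<le> 1" using e(1) by (auto simp: h_def)
  have "psi 0 < psi h" using e(2)[of h] h by simp
  moreover have "psi h \<le> psi 0"
  proof -
    have "f (h *\<^sub>R y + (1 - h) *\<^sub>R x) \<le> h * f y + (1 - h) * f x - mu / 2 * h * (1 - h) * (norm (y - x))\<^sup>2"
      using sc h unfolding strongly_convex_on_def by auto
    moreover have "h *\<^sub>R y + (1 - h) *\<^sub>R x = x + h *\<^sub>R v"
      by (simp add: v_def algebra_simps)
    ultimately show ?thesis unfolding psi_def c_def v_def by (simp add: algebra_simps power2_eq_square)
  qed
  ultimately show False by simp
qed

lemma opt_first:
  fixes f :: "'a::real_inner \<Rightarrow> real"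
  assumes d: "\<forall>x. (f has_derivative (\<lambda>h. grad x \<bullet> h)) (at x)"
    and X: "convex X" "xs \<in> X" "\<forall>y\<in>X. f xs \<le> f y" and y: "y \<in> X"
  shows "grad xs \<bullet> (y - xs) \<ge> 0"
proof (rule ccontr)
  assume neg: "\<not> ?thesis"
  define v where "v = y - xs"
  define psi where "psi t = f (xs + t *\<^sub>R v)" for t
  have D: "DERIV psi 0 :> (grad (xs + 0 *\<^sub>R v) \<bullet> v)"
    unfolding psi_def by (rule line_deriv[OF d])
  have lt: "grad (xs + 0 *\<^sub>R v) \<bullet> v < 0" using neg by (simp add: v_def)
  obtain e where e: "e > 0" "\<And>h. h > 0 \<Longrightarrow> h < e \<Longrightarrow> psi 0 > psi (0 + h)"
    using DERIV_neg_dec_right[OF D lt] by blast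
  define h where "h = min (e / 2) (1 / 2)"
  have h: "h > 0" "h < e" "h \<le> 1" using e(1) by (auto simp: h_def)
  have "psi 0 > psi h" using e(2)[of h] h by simp
  moreover have "xs + h *\<^sub>R v \<in> X"
  proof -
    have "(1 - h) *\<^sub>R xs + h *\<^sub>R y \<in> X"
      using X(1,2) y h by (intro convexD) auto
    moreover have "(1 - h) *\<^sub>R xs + h *\<^sub>R y = xs + h *\<^sub>R v" by (simp add: v_def algebra_simps)
    ultimately show ?thesis by simp
  qed
  ultimately show False using X(3) unfolding psi_def by fastforce
qed

lemma cocoercive:
  fixes f :: "'a::real_inner \<Rightarrow> real"
  assumes SC: "\<And>x y. f y \<ge> f x + grad x \<bullet> (y - x) + mu / 2 * (norm (y - x))\<^sup>2"
    and DL: "\<And>x y. f y \<le> f x + grad x \<bullet> (y - x) + L / 2 * (norm (y - x))\<^sup>2"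
    and mu: "0 < mu" "mu \<le> L"
  shows "(mu + L) * ((grad y - grad x) \<bullet> (y - x)) \<ge> mu * L * (norm (y - x))\<^sup>2 + (norm (grad y - grad x))\<^sup>2"
proof -
  define phi where "phi z = f z - mu / 2 * (norm z)\<^sup>2" for z
  define gp where "gp z = grad z - mu *\<^sub>R z" for z
  define L' where "L' = L - mu"
  have nq: "(norm (b - a))\<^sup>2 = (norm b)\<^sup>2 - (norm a)\<^sup>2 - 2 * (a \<bullet> (b - a))" for a b :: 'a
    by (simp add: power2_norm_eq_inner inner_diff inner_commute algebra_simps)
  have PC: "phi b \<ge> phi a + gp a \<bullet> (b - a)" for a b
    using SC[where x=a and y=b] unfolding phi_def gp_def nq by (simp add: inner_diff_left algebra_simps)
  have PD: "phi b \<le> phi a + gp a \<bullet> (b - a) + L' / 2 * (norm (b - a))\<^sup>2" for a b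
    using DL[where x=a and y=b] unfolding phi_def gp_def L'_def by (simp add: power2_norm_eq_inner inner_diff inner_commute field_simps)
  define w where "w = gp y - gp x"
  define P where "P = w \<bullet> (y - x)"
  define K where "K = (norm w)\<^sup>2"
  have half: "phi b - phi a - gp a \<bullet> (b - a) \<ge> t * K - L' / 2 * t\<^sup>2 * K"
    if "w = gp b - gp a \<or> w = gp a - gp b" and t: "t > 0" for a b t
  proof -
    define ww where "ww = gp b - gp a"
    have Kw: "K = (norm ww)\<^sup>2" using that(1) by (auto simp: K_def ww_def norm_minus_commute)
    define z where "z = b - t *\<^sub>R ww"
    have 1: "phi z \<ge> phi a + gp a \<bullet> (z - a)" by (rule PC)
    have 2: "phi z \<le> phi b + gp b \<bullet> (z - b) + L' / 2 * (norm (z - b))\<^sup>2" by (rule PD)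
    have e1: "gp a \<bullet> (z - a) = gp a \<bullet> (b - a) - t * (gp a \<bullet> ww)"
      by (simp add: z_def inner_diff_right algebra_simps)
    have e2: "gp b \<bullet> (z - b) = - t * (gp b \<bullet> ww)"
      by (simp add: z_def inner_diff_right algebra_simps)
    have e3: "(norm (z - b))\<^sup>2 = t\<^sup>2 * K" using t by (simp add: z_def Kw power_mult_distrib)
    have e4: "gp b \<bullet> ww - gp a \<bullet> ww = K"
      by (simp add: Kw ww_def power2_norm_eq_inner inner_diff_left)
    show ?thesis using 1 2 e1 e2 e3 e4 by (simp add: algebra_simps)
  qed
  have main: "P \<ge> (2 * t - L' * t\<^sup>2) * K" if "t > 0" for t
  proof -
    have a: "phi y - phi x - gp x \<bullet> (y - x) \<ge> t * K - L' / 2 * t\<^sup>2 * K"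
      using half[of y x t] that by (simp add: w_def)
    have b: "phi x - phi y - gp y \<bullet> (x - y) \<ge> t * K - L' / 2 * t\<^sup>2 * K"
      using half[of x y t] that by (simp add: w_def)
    have "P = (- gp x \<bullet> (y - x)) + (- gp y \<bullet> (x - y))"
      by (simp add: P_def w_def inner_diff algebra_simps inner_commute)
    then show ?thesis using a b by (simp add: algebra_simps)
  qed
  have K0: "K \<ge> 0" by (simp add: K_def)
  have key: "L' * P \<ge> K"
  proof (cases "L' > 0")
    case True
    have "P \<ge> (2 * (1 / L') - L' * (1 / L')\<^sup>2) * K" using main[of "1 / L'"] True by simp
    also have "(2 * (1 / L') - L' * (1 / L')\<^sup>2) = 1 / L'" using True by (simp add: power2_eq_square field_simps)
    finally have "P \<ge> K / L'" by simp
    then show ?thesis using True by (simp add: field_simps)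
  next
    case False
    then have L0: "L' = 0" using mu by (simp add: L'_def)
    have "K = 0"
    proof (rule ccontr)
      assume "K \<noteq> 0"
      then have Kp: "K > 0" using K0 by simp
      define t where "t = (\<bar>P\<bar> + 1) / K"
      have "P \<ge> 2 * t * K" using main[of t] L0 Kp by (simp add: t_def)
      also have "2 * t * K = 2 * (\<bar>P\<bar> + 1)" using Kp by (simp add: t_def)
      finally show False by simp
    qed
    then show ?thesis using L0 by simp
  qed
  have eP: "P = (grad y - grad x) \<bullet> (y - x) - mu * (norm (y - x))\<^sup>2"
    by (simp add: P_def w_def gp_def inner_diff_left power2_norm_eq_inner algebra_simps)
  have eK: "K = (norm (grad y - grad x))\<^sup>2 - 2 * mu * ((grad y - grad x) \<bullet> (y - x)) + mu\<^sup>2 * (norm (y - x))\<^sup>2"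
  proof -
    have gen: "(norm (p - c *\<^sub>R q))\<^sup>2 = (norm p)\<^sup>2 - 2 * c * (p \<bullet> q) + c\<^sup>2 * (norm q)\<^sup>2" for p q :: 'a and c :: real
      unfolding power2_norm_eq_inner by (simp add: inner_diff inner_commute power2_eq_square algebra_simps)
    have "w = (grad y - grad x) - mu *\<^sub>R (y - x)" by (simp add: w_def gp_def algebra_simps)
    then show ?thesis unfolding K_def by (simp only: gen)
  qed
  show ?thesis using key unfolding eP eK L'_def by (simp add: algebra_simps power2_eq_square)
qed



lemma scalar:
  fixes mu L N2 K2 P W2 U2 C2 eta a :: real
  assumes mu: "mu > 0" "mu \<le> L" and N2: "N2 \<ge> 0" and K2: "K2 \<ge> mu\<^sup>2 * N2"
    and co: "(mu + L) * P \<ge> mu * L * N2 + K2"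
    and U2: "U2 = N2 - 2 * eta * P + eta\<^sup>2 * K2"
    and eta: "eta = 1 / (2 * (mu + L))"
    and a: "a = mu * L / (mu * L + 2 * (mu + L)\<^sup>2)"
    and W2: "W2 \<le> (1 + a) * U2 + (1 + 1 / a) * eta\<^sup>2 * C2"
  shows "W2 \<le> (1 - mu / (2 * (mu + L))) * N2 + (1 / (2 * (mu + L)\<^sup>2) + 1 / (2 * mu * L)) * C2"
proof -
  define s where "s = mu + L"
  have s: "s > 0" using mu by (simp add: s_def)
  have L: "L > 0" using mu by simp
  have eta': "eta = 1 / (2 * s)" using eta by (simp add: s_def)
  have P: "P \<ge> (mu * L * N2 + K2) / s" using co s by (simp add: s_def field_simps)
  have "U2 \<le> N2 - 2 * eta * ((mu * L * N2 + K2) / s) + eta\<^sup>2 * K2"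
  proof -
    have "eta > 0" using s eta by (simp add: s_def)
    then have "2 * eta * ((mu * L * N2 + K2) / s) \<le> 2 * eta * P" using P by (intro mult_left_mono) auto
    then show ?thesis unfolding U2 by linarith
  qed
  also have "\<dots> = N2 - mu * L * N2 / s\<^sup>2 - 3 / 4 * K2 / s\<^sup>2"
    using s by (simp add: eta' field_simps power2_eq_square)
  also have "\<dots> \<le> N2 - mu * L * N2 / s\<^sup>2 - 3 / 4 * (mu\<^sup>2 * N2) / s\<^sup>2"
    using K2 s by (simp add: divide_right_mono)
  also have "\<dots> = (1 - (mu * L + 3 / 4 * mu\<^sup>2) / s\<^sup>2) * N2"
    using s by (simp add: field_simps)
  finally have U: "U2 \<le> (1 - (mu * L + 3 / 4 * mu\<^sup>2) / s\<^sup>2) * N2" .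
  have a0: "a > 0"
  proof -
    have "mu * L > 0" using mu L by simp
    moreover have "(mu + L)\<^sup>2 \<ge> 0" by simp
    ultimately show ?thesis unfolding a by (intro divide_pos_pos) linarith+
  qed
  have q: "(1 + a) * (1 - (mu * L + 3 / 4 * mu\<^sup>2) / s\<^sup>2) \<le> 1 - mu / (2 * s)"
  proof -
    define q where "q = (mu * L + 3 / 4 * mu\<^sup>2) / s\<^sup>2"
    have q0: "q \<ge> 0" using mu L unfolding q_def by simp
    have "a * (1 - q) \<le> a" using a0 q0 by (simp add: algebra_simps)
    moreover have "a \<le> mu * L / (2 * s\<^sup>2)"
      unfolding a s_def[symmetric] using mu L s
      by (intro divide_left_mono) (auto intro!: mult_pos_pos add_pos_pos)
    moreover have "mu * L / (2 * s\<^sup>2) \<le> q - mu / (2 * s)"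
    proof -
      have ms: "mu * s = mu\<^sup>2 + mu * L" by (simp add: s_def power2_eq_square algebra_simps)
      have "q - mu / (2 * s) - mu * L / (2 * s\<^sup>2) = (mu * L / 2 + 3 / 4 * mu\<^sup>2 - mu * s / 2) / s\<^sup>2"
        using s by (simp add: q_def field_simps power2_eq_square)
      also have "\<dots> = (mu\<^sup>2 / 4) / s\<^sup>2" by (simp add: ms field_simps)
      also have "\<dots> \<ge> 0" by simp
      finally show ?thesis by simp
    qed
    ultimately have "(1 + a) * (1 - q) \<le> 1 - mu / (2 * s)" by (simp add: algebra_simps)
    then show ?thesis by (simp add: q_def)
  qed
  have e: "(1 + 1 / a) * eta\<^sup>2 = 1 / (2 * s\<^sup>2) + 1 / (2 * mu * L)"
  proof -
    have p: "mu * L > 0" using mu L by simp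
    have s2: "s\<^sup>2 > 0" using s by simp
    have pn: "L * mu \<noteq> 0" "mu * L \<noteq> 0" "s \<noteq> 0" using p s by auto
    have a': "a = (mu * L) / (mu * L + 2 * s\<^sup>2)" using a by (simp add: s_def)
    have "1 + 1 / a = 2 * (mu * L + s\<^sup>2) / (mu * L)"
      using p s2 pn unfolding a' by (simp add: field_simps)
    then have "(1 + 1 / a) * eta\<^sup>2 = 2 * (mu * L + s\<^sup>2) / (mu * L) * (1 / (2 * s))\<^sup>2"
      by (simp add: eta')
    also have "\<dots> = 1 / (2 * s\<^sup>2) + 1 / (2 * mu * L)"
      using pn by (simp add: field_simps power2_eq_square)
    finally show ?thesis .
  qed
  have "W2 \<le> (1 + a) * ((1 - (mu * L + 3 / 4 * mu\<^sup>2) / s\<^sup>2) * N2) + (1 + 1 / a) * eta\<^sup>2 * C2"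
    using W2 U a0 by (smt (verit) mult_left_mono)
  also have "\<dots> \<le> (1 - mu / (2 * s)) * N2 + (1 + 1 / a) * eta\<^sup>2 * C2"
    using mult_right_mono[OF q N2] by simp
  finally show ?thesis unfolding e s_def .
qed



lemma sq_expand:
  fixes p q :: "'a::real_inner"
  shows "(norm (p - c *\<^sub>R q))\<^sup>2 = (norm p)\<^sup>2 - 2 * c * (p \<bullet> q) + c\<^sup>2 * (norm q)\<^sup>2"
  unfolding power2_norm_eq_inner by (simp add: inner_diff inner_commute power2_eq_square algebra_simps)

lemma sq_expand2:
  fixes p q :: "'a::real_inner"
  shows "(norm (p - q))\<^sup>2 = (norm p)\<^sup>2 - 2 * (p \<bullet> q) + (norm q)\<^sup>2"
  using sq_expand[of p 1 q] by simp

lemma young: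
  fixes u v :: "'a::real_inner"
  assumes a: "a > 0"
  shows "(norm (u - v))\<^sup>2 \<le> (1 + a) * (norm u)\<^sup>2 + (1 + 1 / a) * (norm v)\<^sup>2"
proof -
  have "0 \<le> (norm (a *\<^sub>R u + v))\<^sup>2" by simp
  also have "\<dots> = a\<^sup>2 * (norm u)\<^sup>2 + 2 * a * (u \<bullet> v) + (norm v)\<^sup>2"
    unfolding power2_norm_eq_inner by (simp add: inner_add inner_commute power2_eq_square algebra_simps)
  finally have h: "- 2 * a * (u \<bullet> v) \<le> a\<^sup>2 * (norm u)\<^sup>2 + (norm v)\<^sup>2" by simp
  have "- 2 * (u \<bullet> v) \<le> a * (norm u)\<^sup>2 + (norm v)\<^sup>2 / a"
  proof -
    have "a * (- 2 * (u \<bullet> v)) \<le> a * (a * (norm u)\<^sup>2 + (norm v)\<^sup>2 / a)"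
      using h a by (simp add: algebra_simps power2_eq_square)
    then show ?thesis using a by (metis mult_le_cancel_left_pos)
  qed
  then show ?thesis unfolding sq_expand2 by (simp add: algebra_simps)
qed

theorem lemmaB1:
  fixes f :: "'a::euclidean_space \<Rightarrow> real" and grad :: "'a \<Rightarrow> 'a"
    and L mu C D :: real and X :: "'a set" and xs x :: 'a
    and M :: "'b measure" and g :: "'b \<Rightarrow> 'a"
  assumes "0 < mu" and "mu \<le> L"
    and "L_smooth L f grad"
    and "strongly_convex_on UNIV mu f"
    and "X \<noteq> {}" and "closed X" and "convex X"
    and "xs \<in> X" and "\<forall>y\<in>X. f xs \<le> f y"
    and "prob_space M"
    and "g \<in> borel_measurable M"
    and "integrable M g"
    and "integrable M (\<lambda>\<omega>. (norm (g \<omega>))\<^sup>2)"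
    and "0 \<le> C" and "0 \<le> D"
    and "norm ((\<integral>\<omega>. g \<omega> \<partial>M) - grad x) \<le> C"
    and "(\<integral>\<omega>. (norm (g \<omega> - (\<integral>\<omega>'. g \<omega>' \<partial>M)))\<^sup>2 \<partial>M) \<le> D"
  shows "(\<integral>\<omega>. (norm (closest_point X (x - (1 / (2 * (mu + L))) *\<^sub>R g \<omega>) - xs))\<^sup>2 \<partial>M)
         \<le> (1 - mu / (2 * (mu + L))) * (norm (x - xs))\<^sup>2
           + (1 / (2 * (mu + L)\<^sup>2) + 1 / (2 * mu * L)) * C\<^sup>2
           + 1 / (4 * (mu + L)\<^sup>2) * D"
proof -
  note assms_all = assms
  have mu: "0 < mu" "mu \<le> L" using assms(1) assms(2) by auto
  have Lp: "L > 0" using mu by simp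
  define eta where "eta = 1 / (2 * (mu + L))"
  have eta0: "eta > 0" using mu unfolding eta_def by simp
  have d: "\<forall>x. (f has_derivative (\<lambda>h. grad x \<bullet> h)) (at x)"
    using assms(3) unfolding L_smooth_def by auto
  have SC: "\<And>a b. f b \<ge> f a + grad a \<bullet> (b - a) + mu / 2 * (norm (b - a))\<^sup>2"
    using sc_first[OF assms(4) d] by blast
  have DL: "\<And>a b. f b \<le> f a + grad a \<bullet> (b - a) + L / 2 * (norm (b - a))\<^sup>2"
    using descent[OF assms(3)] by blast
  define N2 where "N2 = (norm (x - xs))\<^sup>2"
  define P where "P = (grad x - grad xs) \<bullet> (x - xs)"
  define K2 where "K2 = (norm (grad x - grad xs))\<^sup>2"
  have co: "(mu + L) * P \<ge> mu * L * N2 + K2"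
    unfolding P_def N2_def K2_def
    by (rule cocoercive[where f=f and grad=grad and mu=mu and L=L and x=xs and y=x, OF SC DL mu])
  have PN: "P \<ge> mu * N2"
  proof -
    have 1: "f x \<ge> f xs + grad xs \<bullet> (x - xs) + mu / 2 * (norm (x - xs))\<^sup>2" by (rule SC)
    have 2: "f xs \<ge> f x + grad x \<bullet> (xs - x) + mu / 2 * (norm (xs - x))\<^sup>2" by (rule SC)
    have 3: "grad x \<bullet> (xs - x) = - (grad x \<bullet> (x - xs))" by (simp add: inner_diff_right)
    have 4: "norm (xs - x) = norm (x - xs)" by (rule norm_minus_commute)
    show ?thesis using 1 2 3 4 unfolding P_def N2_def by (simp add: inner_diff_left)
  qed
  have K2N: "K2 \<ge> mu\<^sup>2 * N2"
  proof (cases "x = xs")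
    case True then show ?thesis by (simp add: N2_def K2_def)
  next
    case False
    have Np: "norm (x - xs) > 0" using False by simp
    have "mu * (norm (x - xs) * norm (x - xs)) \<le> norm (grad x - grad xs) * norm (x - xs)"
      using PN norm_cauchy_schwarz[of "grad x - grad xs" "x - xs"]
      unfolding P_def N2_def by (simp add: power2_eq_square)
    then have "mu * norm (x - xs) \<le> norm (grad x - grad xs)" using Np
      by (simp add: mult.assoc[symmetric] mult_le_cancel_right_pos)
    then have "(mu * norm (x - xs))\<^sup>2 \<le> (norm (grad x - grad xs))\<^sup>2"
      using mu by (intro power_mono) auto
    then show ?thesis by (simp add: N2_def K2_def power_mult_distrib)
  qed
  have fixp: "xs = closest_point X (xs - eta *\<^sub>R grad xs)"
  proof (rule closest_point_unique[OF assms(7) assms(6) assms(8)], intro ballI)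
    fix z assume z: "z \<in> X"
    have g0: "grad xs \<bullet> (z - xs) \<ge> 0" by (rule opt_first[OF d assms(7) assms(8) assms(9) z])
    have "(dist (xs - eta *\<^sub>R grad xs) xs)\<^sup>2 \<le> (dist (xs - eta *\<^sub>R grad xs) z)\<^sup>2"
    proof -
      have e: "(xs - eta *\<^sub>R grad xs) - z = (xs - z) - eta *\<^sub>R grad xs" by (simp add: algebra_simps)
      have "(dist (xs - eta *\<^sub>R grad xs) z)\<^sup>2 = (norm (xs - z))\<^sup>2 - 2 * eta * ((xs - z) \<bullet> grad xs) + eta\<^sup>2 * (norm (grad xs))\<^sup>2"
        unfolding dist_norm e sq_expand ..
      moreover have "(xs - z) \<bullet> grad xs \<le> 0" using g0 by (simp add: inner_commute inner_diff)
      moreover have "(dist (xs - eta *\<^sub>R grad xs) xs)\<^sup>2 = eta\<^sup>2 * (norm (grad xs))\<^sup>2"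
        using eta0 by (simp add: dist_norm power_mult_distrib)
      moreover have "2 * eta * ((xs - z) \<bullet> grad xs) \<le> 0"
        using eta0 \<open>(xs - z) \<bullet> grad xs \<le> 0\<close> by (simp add: mult_nonneg_nonpos)
      moreover have "0 \<le> (norm (xs - z))\<^sup>2" by simp
      ultimately show ?thesis by linarith
    qed
    then show "dist (xs - eta *\<^sub>R grad xs) xs \<le> dist (xs - eta *\<^sub>R grad xs) z"
      by (rule power2_le_imp_le) simp
  qed
  define m where "m = (\<integral>\<omega>. g \<omega> \<partial>M)"
  define c0 where "c0 = x - xs + eta *\<^sub>R grad xs"
  define E where "E = (\<integral>\<omega>. (norm (g \<omega>))\<^sup>2 \<partial>M)"
  have pw: "(norm (closest_point X (x - eta *\<^sub>R g \<omega>) - xs))\<^sup>2 \<le> (norm (c0 - eta *\<^sub>R g \<omega>))\<^sup>2" for \<omega>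
  proof -
    have "dist (closest_point X (x - eta *\<^sub>R g \<omega>)) (closest_point X (xs - eta *\<^sub>R grad xs))
          \<le> dist (x - eta *\<^sub>R g \<omega>) (xs - eta *\<^sub>R grad xs)"
      by (rule closest_point_lipschitz[OF assms(7) assms(6) assms(5)])
    moreover have "(x - eta *\<^sub>R g \<omega>) - (xs - eta *\<^sub>R grad xs) = c0 - eta *\<^sub>R g \<omega>"
      by (simp add: c0_def algebra_simps)
    ultimately have "norm (closest_point X (x - eta *\<^sub>R g \<omega>) - xs) \<le> norm (c0 - eta *\<^sub>R g \<omega>)"
      using fixp[symmetric] by (simp add: dist_norm)
    then show ?thesis by (intro power_mono) auto
  qed
  have ps: "prob_space M" by (rule assms(10))
  have m1: "measure M (space M) = 1" using prob_space.prob_space[OF ps] .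
  have ig: "integrable M g" and ig2: "integrable M (\<lambda>\<omega>. (norm (g \<omega>))\<^sup>2)" and gm: "g \<in> borel_measurable M"
    using assms(11) assms(12) assms(13) by auto
  have fm: "finite_measure M" using ps by (simp add: prob_space_def)
  have em: "integrable M (\<lambda>_. c)" for c :: real by (rule finite_measure.integrable_const[OF fm])
  have iin: "integrable M (\<lambda>\<omega>. c0 \<bullet> g \<omega>)" using ig by simp
  have iin2: "integrable M (\<lambda>\<omega>. g \<omega> \<bullet> m)" using ig by simp
  have ii1: "(\<integral>\<omega>. c0 \<bullet> g \<omega> \<partial>M) = c0 \<bullet> m" using ig by (simp add: m_def)
  have ii2: "(\<integral>\<omega>. g \<omega> \<bullet> m \<partial>M) = m \<bullet> m" using ig by (simp add: m_def)
  have int1: "integrable M (\<lambda>\<omega>. (norm (c0 - eta *\<^sub>R g \<omega>))\<^sup>2)"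
    unfolding sq_expand
    by (intro Bochner_Integration.integrable_add Bochner_Integration.integrable_diff integrable_mult_right em iin ig2)
  have I1: "(\<integral>\<omega>. (norm (c0 - eta *\<^sub>R g \<omega>))\<^sup>2 \<partial>M) = (norm c0)\<^sup>2 - 2 * eta * (c0 \<bullet> m) + eta\<^sup>2 * E"
    unfolding sq_expand using iin ig2 em m1 ii1
    by (simp add: Bochner_Integration.integral_add Bochner_Integration.integral_diff E_def)
  have I2: "(\<integral>\<omega>. (norm (g \<omega> - m))\<^sup>2 \<partial>M) = E - (norm m)\<^sup>2"
    unfolding sq_expand2 using iin2 ig2 em m1 ii2
    by (simp add: Bochner_Integration.integral_add Bochner_Integration.integral_diff E_def power2_norm_eq_inner)
  have meas: "(\<lambda>\<omega>. (norm (closest_point X (x - eta *\<^sub>R g \<omega>) - xs))\<^sup>2) \<in> borel_measurable M"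
  proof -
    have cc: "continuous_on UNIV (closest_point X)"
      by (rule continuous_on_closest_point[OF assms(7) assms(6) assms(5)])
    have "continuous_on UNIV (\<lambda>v. (norm (closest_point X (x - eta *\<^sub>R v) - xs))\<^sup>2)"
      by (intro continuous_intros continuous_on_compose2[OF cc]) auto
    then show ?thesis using borel_measurable_continuous_on[OF _ gm] by blast
  qed
  have int0: "integrable M (\<lambda>\<omega>. (norm (closest_point X (x - eta *\<^sub>R g \<omega>) - xs))\<^sup>2)"
    by (rule Bochner_Integration.integrable_bound[OF int1 meas]) (use pw in auto)
  have step1: "(\<integral>\<omega>. (norm (closest_point X (x - eta *\<^sub>R g \<omega>) - xs))\<^sup>2 \<partial>M)
      \<le> (norm (c0 - eta *\<^sub>R m))\<^sup>2 + eta\<^sup>2 * (\<integral>\<omega>. (norm (g \<omega> - m))\<^sup>2 \<partial>M)"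
  proof -
    have "(\<integral>\<omega>. (norm (closest_point X (x - eta *\<^sub>R g \<omega>) - xs))\<^sup>2 \<partial>M) \<le> (\<integral>\<omega>. (norm (c0 - eta *\<^sub>R g \<omega>))\<^sup>2 \<partial>M)"
      by (rule integral_mono[OF int0 int1 pw])
    also have "\<dots> = (norm (c0 - eta *\<^sub>R m))\<^sup>2 + eta\<^sup>2 * (\<integral>\<omega>. (norm (g \<omega> - m))\<^sup>2 \<partial>M)"
      unfolding I1 I2 by (simp add: sq_expand algebra_simps)
    finally show ?thesis .
  qed
  define a where "a = mu * L / (mu * L + 2 * (mu + L)\<^sup>2)"
  have a0: "a > 0" unfolding a_def using mu Lp by (intro divide_pos_pos) (auto intro!: add_pos_nonneg)
  define u where "u = (x - xs) - eta *\<^sub>R (grad x - grad xs)"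
  define b where "b = m - grad x"
  have cu: "c0 - eta *\<^sub>R m = u - eta *\<^sub>R b" by (simp add: c0_def u_def b_def algebra_simps)
  have U2: "(norm u)\<^sup>2 = N2 - 2 * eta * P + eta\<^sup>2 * K2"
    unfolding u_def sq_expand N2_def P_def K2_def by (simp add: inner_commute)
  have bC: "(norm b)\<^sup>2 \<le> C\<^sup>2" using assms(16) unfolding b_def m_def by (intro power_mono) auto
  have W: "(norm (c0 - eta *\<^sub>R m))\<^sup>2 \<le> (1 + a) * (norm u)\<^sup>2 + (1 + 1 / a) * eta\<^sup>2 * C\<^sup>2"
  proof -
    have "(norm (c0 - eta *\<^sub>R m))\<^sup>2 \<le> (1 + a) * (norm u)\<^sup>2 + (1 + 1 / a) * (norm (eta *\<^sub>R b))\<^sup>2"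
      unfolding cu by (rule young[OF a0])
    also have "(norm (eta *\<^sub>R b))\<^sup>2 = eta\<^sup>2 * (norm b)\<^sup>2" using eta0 by (simp add: power_mult_distrib)
    also have "(1 + 1 / a) * (eta\<^sup>2 * (norm b)\<^sup>2) \<le> (1 + 1 / a) * eta\<^sup>2 * C\<^sup>2"
      using a0 bC by (simp add: mult.assoc mult_left_mono)
    finally show ?thesis by simp
  qed
  have main: "(norm (c0 - eta *\<^sub>R m))\<^sup>2 \<le> (1 - mu / (2 * (mu + L))) * N2 + (1 / (2 * (mu + L)\<^sup>2) + 1 / (2 * mu * L)) * C\<^sup>2"
    by (rule scalar[OF mu _ K2N co U2 eta_def a_def W]) (simp add: N2_def)
  have var: "eta\<^sup>2 * (\<integral>\<omega>. (norm (g \<omega> - m))\<^sup>2 \<partial>M) \<le> 1 / (4 * (mu + L)\<^sup>2) * D"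
  proof -
    have "eta\<^sup>2 = 1 / (4 * (mu + L)\<^sup>2)" by (simp add: eta_def power2_eq_square algebra_simps)
    moreover have "(\<integral>\<omega>. (norm (g \<omega> - m))\<^sup>2 \<partial>M) \<le> D" using assms(17) by (simp add: m_def)
    ultimately show ?thesis by (simp add: divide_right_mono)
  qed
  show ?thesis using step1 main var unfolding eta_def N2_def by simp
qed

end
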